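(* Let $d\ge1$ and let $G$ be a $d$-regular triangle-free graph on $n$ vertices. Then for every $\lambda>0$, \[ \frac1n\overline\alpha_G(\lambda)\;\le\;\frac{1}{2d}\overline\alpha_{K_{d,d}}(\lambda)=\frac{\lambda(1+\lambda)^{d-1}}{2(1+\lambda)^d-1}, \] with equality only if $G$ is a disjoint union of copies of $K_{d,d}$.
   Context: For a graph $H$ and $\lambda>0$, $P_H(\lambda)=\sum_J\lambda^{|J|}$ summed over all independent sets $J$ of $H$ (including the empty set), and $\overline\alpha_H(\lambda)=\lambda P_H'(\lambda)/P_H(\lambda)$ is the expected size of an independent set drawn from the hard-core model $\Pr[J]=\lambda^{|J|}/P_H(\lambda)$. $K_{d,d}$ is the complete bipartite graph with parts of size $d$. *)

theory Defs
  imports "HOL-Analysis.Analysis"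
begin

definition simple_graph :: "'a set \<Rightarrow> ('a \<Rightarrow> 'a \<Rightarrow> bool) \<Rightarrow> bool" where
  "simple_graph V E \<longleftrightarrow> finite V \<and> (\<forall>u v. E u v \<longrightarrow> u \<in> V \<and> v \<in> V)
     \<and> (\<forall>u v. E u v \<longrightarrow> E v u) \<and> (\<forall>u. \<not> E u u)"

definition regular :: "'a set \<Rightarrow> ('a \<Rightarrow> 'a \<Rightarrow> bool) \<Rightarrow> nat \<Rightarrow> bool" where
  "regular V E d \<longleftrightarrow> (\<forall>v\<in>V. card {u\<in>V. E v u} = d)"

definition triangle_free :: "'a set \<Rightarrow> ('a \<Rightarrow> 'a \<Rightarrow> bool) \<Rightarrow> bool" where
  "triangle_free V E \<longleftrightarrow> \<not> (\<exists>u\<in>V. \<exists>v\<in>V. \<exists>w\<in>V. E u v \<and> E v w \<and> E u w)"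

definition indep_set :: "'a set \<Rightarrow> ('a \<Rightarrow> 'a \<Rightarrow> bool) \<Rightarrow> 'a set \<Rightarrow> bool" where
  "indep_set V E J \<longleftrightarrow> J \<subseteq> V \<and> (\<forall>u\<in>J. \<forall>v\<in>J. \<not> E u v)"

definition indep_poly :: "'a set \<Rightarrow> ('a \<Rightarrow> 'a \<Rightarrow> bool) \<Rightarrow> real \<Rightarrow> real" where
  "indep_poly V E lam = (\<Sum>J\<in>{J. indep_set V E J}. lam ^ card J)"

text \<open>Expected size of a hard-core independent set: lambda P'(lambda) / P(lambda).\<close>
definition occ :: "'a set \<Rightarrow> ('a \<Rightarrow> 'a \<Rightarrow> bool) \<Rightarrow> real \<Rightarrow> real" where
  "occ V E lam = lam * deriv (indep_poly V E) lam / indep_poly V E lam"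

definition Kdd_vertices :: "nat \<Rightarrow> (nat \<times> bool) set" where
  "Kdd_vertices d = {0..<d} \<times> (UNIV :: bool set)"

definition Kdd_edge :: "nat \<Rightarrow> nat \<times> bool \<Rightarrow> nat \<times> bool \<Rightarrow> bool" where
  "Kdd_edge d x y \<longleftrightarrow> x \<in> Kdd_vertices d \<and> y \<in> Kdd_vertices d \<and> snd x \<noteq> snd y"

definition disjoint_union_Kdd :: "'a set \<Rightarrow> ('a \<Rightarrow> 'a \<Rightarrow> bool) \<Rightarrow> nat \<Rightarrow> bool" where
  "disjoint_union_Kdd V E d \<longleftrightarrow>
     (\<exists>(m::nat) (f :: 'a \<Rightarrow> nat \<times> (nat \<times> bool)).
        bij_betw f V ({0..<m} \<times> Kdd_vertices d) \<and>
        (\<forall>u\<in>V. \<forall>v\<in>V. E u v \<longleftrightarrow>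
            fst (f u) = fst (f v) \<and> Kdd_edge d (snd (f u)) (snd (f v))))"

end

theory Submission
  imports Defs
begin

lemma bern_strict:
  fixes q :: real assumes "q > 1" "n \<ge> 2"
  shows "1 + real n * (q - 1) < q ^ n"
  using assms(2)
proof (induction n rule: dec_induct)
  case base
  have "0 < (q-1)^2" using assms(1) by simp
  then show ?case by (simp add: power2_eq_square algebra_simps)
next
  case (step k)
  have "q * (1 + real k * (q - 1)) < q * q ^ k" using step assms(1) by simp
  moreover have "1 + real (Suc k) * (q - 1) \<le> q * (1 + real k * (q - 1))"
  proof -
    have "0 \<le> real k * ((q-1)*(q-1))" by simp
    then show ?thesis by (simp add: algebra_simps)
  qed
  ultimately show ?case by simp
qed

definition Hq :: "real \<Rightarrow> nat \<Rightarrow> real" where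
  "Hq q k = (q^k - 1) / (real k * q^k)"

lemma Hq_step:
  fixes q :: real assumes "q > 1" "k \<ge> 1"
  shows "Hq q (Suc k) < Hq q k"
proof -
  have b: "1 + real (Suc k) * (q - 1) < q ^ Suc k" using bern_strict[OF assms(1), of "Suc k"] assms(2) by simp
  have qk: "q^k > 0" using assms(1) by simp
  have "real k * (q^(Suc k) - 1) * q^k < (q^k - 1) * (real (Suc k) * q^(Suc k))"
  proof -
    have "real k * (q^(Suc k) - 1) < real (Suc k) * (q^(Suc k) - q)"
      using b by (simp add: algebra_simps)
    then have "real k * (q^(Suc k) - 1) * q^k < real (Suc k) * (q^(Suc k) - q) * q^k"
      using qk by simp
    also have "\<dots> = (q^k - 1) * (real (Suc k) * q^(Suc k))" by (simp add: algebra_simps)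
    finally show ?thesis .
  qed
  then show ?thesis unfolding Hq_def using qk assms
    by (simp add: divide_simps) (simp add: algebra_simps)
qed

lemma Hq_less:
  fixes q :: real assumes "q > 1" "y \<ge> 1" "y < d"
  shows "Hq q d < Hq q y"
proof -
  have "\<And>m. Hq q (y + Suc m) < Hq q y"
  proof -
    fix m show "Hq q (y + Suc m) < Hq q y"
    proof (induction m)
      case 0 then show ?case using Hq_step[OF assms(1,2)] by simp
    next
      case (Suc m)
      have "Hq q (Suc (y + Suc m)) < Hq q (y + Suc m)" using Hq_step[OF assms(1)] assms(2) by simp
      then show ?case using Suc by simp
    qed
  qed
  from this[of "d - y - 1"] show ?thesis using assms by simp
qed

definition slk :: "real \<Rightarrow> nat \<Rightarrow> nat \<Rightarrow> real" where
  "slk q d y = q^y - 1 - ((1 - 1/q^d) / real d) * real y * q^y"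

lemma slk_nonneg:
  fixes q :: real assumes "q > 1" "y \<le> d" "d \<ge> 1"
  shows "slk q d y \<ge> 0" and "slk q d y = 0 \<Longrightarrow> y = 0 \<or> y = d"
proof -
  have qd: "q^d > 0" "q^y > 0" using assms by auto
  have key: "slk q d y = (real d * q^d * (q^y - 1) - real y * q^y * (q^d - 1)) / (real d * q^d)"
    unfolding slk_def using qd assms by (simp add: field_simps)
  have main: "y \<ge> 1 \<Longrightarrow> y < d \<Longrightarrow> real y * q^y * (q^d - 1) < real d * q^d * (q^y - 1)"
  proof -
    assume y: "y \<ge> 1" "y < d"
    have "Hq q d < Hq q y" using Hq_less[OF assms(1) y] .
    then show ?thesis unfolding Hq_def using qd y
      by (simp add: divide_simps) (simp add: algebra_simps)
  qed
  have "real y * q^y * (q^d - 1) \<le> real d * q^d * (q^y - 1)"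
  proof (cases "y = 0 \<or> y = d")
    case True then show ?thesis by (auto simp: algebra_simps)
  next
    case False then show ?thesis using main assms by fastforce
  qed
  then show "slk q d y \<ge> 0" unfolding key using qd assms by simp
  show "slk q d y = 0 \<Longrightarrow> y = 0 \<or> y = d"
  proof (rule ccontr)
    assume "slk q d y = 0" "\<not> (y = 0 \<or> y = d)"
    then have "real y * q^y * (q^d - 1) < real d * q^d * (q^y - 1)" using main assms by auto
    then have "slk q d y > 0" unfolding key using qd assms by simp
    then show False using \<open>slk q d y = 0\<close> by simp
  qed
qed

lemma sum_Pow_insert:
  assumes "finite A" "a \<notin> A"
  shows "(\<Sum>S\<in>Pow (insert a A). g S) = (\<Sum>S\<in>Pow A. g S) + (\<Sum>S\<in>Pow A. g (insert a S))"
proof -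
  have "Pow (insert a A) = Pow A \<union> insert a ` Pow A" by (rule Pow_insert)
  moreover have "Pow A \<inter> insert a ` Pow A = {}" using assms by auto
  moreover have "inj_on (insert a) (Pow A)" using assms unfolding inj_on_def by (metis PowD insert_ident subsetD)
  ultimately show ?thesis using assms by (simp add: sum.union_disjoint sum.reindex)
qed

lemma sum_Pow_pow:
  fixes x :: real assumes "finite A"
  shows "(\<Sum>S\<in>Pow A. x ^ card S) = (1 + x) ^ card A"
    and "(\<Sum>S\<in>Pow A. real (card S) * x ^ card S) = real (card A) * x * (1 + x) ^ (card A - 1)"
  using assms
proof (induction A rule: finite_induct)
  case empty
  { case 1 show ?case by simp }
  { case 2 show ?case by simp }
next
  case (insert a A)
  have c: "\<And>S. S \<in> Pow A \<Longrightarrow> card (insert a S) = Suc (card S)"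
    using insert by (meson PowD finite_subset card_insert_disjoint subsetD)
  { case 1
    have "(\<Sum>S\<in>Pow (insert a A). x ^ card S) = (1+x)^card A + (\<Sum>S\<in>Pow A. x * x ^ card S)"
    proof -
      have e: "(\<Sum>S\<in>Pow A. x^card (insert a S)) = (\<Sum>S\<in>Pow A. x * x^card S)"
        by (rule sum.cong) (auto simp: c)
      show ?thesis using sum_Pow_insert[OF insert(1,2), of "\<lambda>S. x ^ card S"] insert(3) e by simp
    qed
    also have "\<dots> = (1 + x) ^ card (insert a A)" using insert
      by (simp add: sum_distrib_left[symmetric] algebra_simps)
    finally show ?case . }
  { case 2
    have "(\<Sum>S\<in>Pow (insert a A). real (card S) * x ^ card S)
       = real (card A) * x * (1 + x) ^ (card A - 1)
         + (\<Sum>S\<in>Pow A. x * (real (card S) * x ^ card S) + x * x ^ card S)"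
    proof -
      have e: "(\<Sum>S\<in>Pow A. real (card (insert a S)) * x^card (insert a S)) = (\<Sum>S\<in>Pow A. x * (real (card S) * x ^ card S) + x * x ^ card S)"
        by (rule sum.cong) (auto simp: c algebra_simps)
      show ?thesis using sum_Pow_insert[OF insert(1,2), of "\<lambda>S. real (card S) * x ^ card S"] insert(4) e by simp
    qed
    also have "\<dots> = real (card A) * x * (1 + x) ^ (card A - 1) + x * (real (card A) * x * (1 + x) ^ (card A - 1)) + x * (1+x)^card A"
      using insert(3,4) by (simp add: sum.distrib sum_distrib_left[symmetric])
    also have "\<dots> = real (card (insert a A)) * x * (1 + x) ^ (card (insert a A) - 1)"
    proof (cases "card A")
      case 0 then show ?thesis using insert by simp
    next
      case (Suc k) then show ?thesis using insert by (simp add: algebra_simps)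
    qed
    finally show ?case . }
qed

lemma indep_finite: "simple_graph V E \<Longrightarrow> finite {J. indep_set V E J}"
  unfolding simple_graph_def indep_set_def
  by (rule finite_subset[of _ "Pow V"]) auto

lemma indep_finite_set: "simple_graph V E \<Longrightarrow> indep_set V E J \<Longrightarrow> finite J"
  unfolding simple_graph_def indep_set_def by (auto intro: finite_subset)

lemma lam_deriv:
  assumes "simple_graph V E"
  shows "lam * deriv (indep_poly V E) lam = (\<Sum>J\<in>{J. indep_set V E J}. real (card J) * lam ^ card J)"
proof -
  have "((\<lambda>x. \<Sum>J\<in>{J. indep_set V E J}. x ^ card J) has_real_derivative
        (\<Sum>J\<in>{J. indep_set V E J}. real (card J) * lam ^ (card J - Suc 0))) (at lam)"
    by (rule DERIV_sum) (rule DERIV_pow)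
  then have "deriv (indep_poly V E) lam = (\<Sum>J\<in>{J. indep_set V E J}. real (card J) * lam ^ (card J - Suc 0))"
    unfolding indep_poly_def[abs_def] by (rule DERIV_imp_deriv)
  then have "lam * deriv (indep_poly V E) lam = (\<Sum>J\<in>{J. indep_set V E J}. lam * (real (card J) * lam ^ (card J - Suc 0)))"
    by (simp add: sum_distrib_left)
  also have "\<dots> = (\<Sum>J\<in>{J. indep_set V E J}. real (card J) * lam ^ card J)"
  proof (rule sum.cong)
    fix J show "lam * (real (card J) * lam ^ (card J - Suc 0)) = real (card J) * lam ^ card J"
      by (cases "card J") auto
  qed simp
  finally show ?thesis .
qed

lemma indep_poly_pos:
  assumes "simple_graph V E" "lam > 0"
  shows "indep_poly V E lam > 0"
proof -
  have "{} \<in> {J. indep_set V E J}" by (simp add: indep_set_def)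
  then have "indep_poly V E lam = 1 + (\<Sum>J\<in>{J. indep_set V E J} - {{}}. lam ^ card J)"
    unfolding indep_poly_def using indep_finite[OF assms(1)] by (simp add: sum.remove)
  moreover have "(\<Sum>J\<in>{J. indep_set V E J} - {{}}. lam ^ card J) \<ge> 0"
    using assms(2) by (intro sum_nonneg) simp
  ultimately show ?thesis by simp
qed

lemma Kdd_indep:
  "{J. indep_set (Kdd_vertices d) (Kdd_edge d) J} = Pow ({0..<d} \<times> {True}) \<union> Pow ({0..<d} \<times> {False})"
proof (intro set_eqI iffI)
  fix J assume "J \<in> {J. indep_set (Kdd_vertices d) (Kdd_edge d) J}"
  then have J: "J \<subseteq> {0..<d} \<times> UNIV" "\<And>u v. u \<in> J \<Longrightarrow> v \<in> J \<Longrightarrow> snd u = snd v"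
    unfolding indep_set_def Kdd_edge_def Kdd_vertices_def by blast+
  show "J \<in> Pow ({0..<d} \<times> {True}) \<union> Pow ({0..<d} \<times> {False})"
  proof (cases "\<exists>u\<in>J. snd u")
    case True
    then obtain u where "u \<in> J" "snd u" by blast
    then have "J \<subseteq> {0..<d} \<times> {True}"
    proof (intro subsetI)
      fix x assume "x \<in> J"
      then have "snd x = snd u" "x \<in> {0..<d} \<times> UNIV"
        using J(2)[OF \<open>x \<in> J\<close> \<open>u \<in> J\<close>] J(1) by blast+
      then show "x \<in> {0..<d} \<times> {True}" using \<open>snd u\<close> by (cases x) auto
    qed
    then show ?thesis by simp
  next
    case False
    then have "J \<subseteq> {0..<d} \<times> {False}"
    proof (intro subsetI)
      fix x assume "x \<in> J"
      then have "\<not> snd x" "x \<in> {0..<d} \<times> UNIV" using J(1) False by blast+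
      then show "x \<in> {0..<d} \<times> {False}" by (cases x) auto
    qed
    then show ?thesis by simp
  qed
next
  fix J assume "J \<in> Pow ({0..<d} \<times> {True}) \<union> Pow ({0..<d} \<times> {False})"
  then have "J \<subseteq> {0..<d} \<times> {True} \<or> J \<subseteq> {0..<d} \<times> {False}" by simp
  then have "J \<subseteq> Kdd_vertices d \<and> (\<forall>u\<in>J. \<forall>v\<in>J. snd u = snd v)"
    unfolding Kdd_vertices_def by (elim disjE) force+
  then show "J \<in> {J. indep_set (Kdd_vertices d) (Kdd_edge d) J}"
    unfolding indep_set_def Kdd_edge_def by blast
qed

lemma Kdd_poly: "indep_poly (Kdd_vertices d) (Kdd_edge d) = (\<lambda>x. 2 * (1 + x) ^ d - 1)"
proof
  fix x :: real
  let ?L = "{0..<d} \<times> {True}" and ?R = "{0..<d} \<times> {False}"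
  have int: "Pow ?L \<inter> Pow ?R = {{}}" by auto
  have cL: "card ?L = d" and cR: "card ?R = d" by (simp_all add: card_cartesian_product)
  have "indep_poly (Kdd_vertices d) (Kdd_edge d) x = (\<Sum>J\<in>Pow ?L \<union> Pow ?R. x ^ card J)"
    unfolding indep_poly_def Kdd_indep ..
  also have "\<dots> = (\<Sum>J\<in>Pow ?L. x ^ card J) + (\<Sum>J\<in>Pow ?R. x ^ card J) - (\<Sum>J\<in>Pow ?L \<inter> Pow ?R. x ^ card J)"
    by (rule sum_Un) auto
  also have "\<dots> = 2 * (1 + x) ^ d - 1"
    unfolding int using sum_Pow_pow(1)[of ?L x] sum_Pow_pow(1)[of ?R x] cL cR by simp
  finally show "indep_poly (Kdd_vertices d) (Kdd_edge d) x = 2 * (1 + x) ^ d - 1" .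
qed

lemma Kdd_occ:
  fixes lam :: real assumes "d \<ge> 1" "lam > 0"
  shows "occ (Kdd_vertices d) (Kdd_edge d) lam / (2 * real d) = lam * (1 + lam) ^ (d - 1) / (2 * (1 + lam) ^ d - 1)"
proof -
  have "((\<lambda>x::real. 2 * (1 + x) ^ d - 1) has_real_derivative 2 * (real d * (1 + lam) ^ (d - 1))) (at lam)"
    by (auto intro!: derivative_eq_intros)
  then have D: "deriv (\<lambda>x::real. 2 * (1 + x) ^ d - 1) lam = 2 * (real d * (1 + lam) ^ (d - 1))"
    by (rule DERIV_imp_deriv)
  have "(1 + lam) ^ d \<ge> 1" using assms by simp
  then have pos: "2 * (1 + lam) ^ d - 1 > 0" by simp
  have dp: "real d > 0" using assms by simp
  show ?thesis unfolding occ_def Kdd_poly D using dp by simp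
qed

locale gr =
  fixes V :: "'a set" and E :: "'a \<Rightarrow> 'a \<Rightarrow> bool" and d :: nat
  assumes sg: "simple_graph V E" and reg: "regular V E d" and tf: "triangle_free V E"
begin

definition nb where "nb v = {u\<in>V. E v u}"
definition TT where "TT v = {T. indep_set V E T \<and> T \<inter> nb v = {}}"
definition av where "av v T = {u\<in>nb v. \<forall>t\<in>T. \<not> E u t}"

lemma finV: "finite V" using sg unfolding simple_graph_def by blast
lemma edgeV: "E u w \<Longrightarrow> u \<in> V \<and> w \<in> V" using sg unfolding simple_graph_def by blast
lemma sym: "E u w \<Longrightarrow> E w u" using sg unfolding simple_graph_def by blast
lemma irr: "\<not> E u u" using sg unfolding simple_graph_def by blast
lemma nb_card: "v \<in> V \<Longrightarrow> card (nb v) = d" using reg unfolding regular_def nb_def by blast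
lemma nb_sub: "nb v \<subseteq> V" unfolding nb_def by blast
lemma nb_fin: "finite (nb v)" using finV nb_sub by (rule finite_subset[rotated])
lemma av_sub: "av v T \<subseteq> nb v" unfolding av_def by blast
lemma av_fin: "finite (av v T)" using nb_fin av_sub by (rule finite_subset[rotated])
lemma av_card: "v \<in> V \<Longrightarrow> card (av v T) \<le> d" using nb_card av_sub nb_fin card_mono by metis
lemma nb_indep: "v \<in> V \<Longrightarrow> u \<in> nb v \<Longrightarrow> w \<in> nb v \<Longrightarrow> \<not> E u w"
  using tf unfolding triangle_free_def nb_def by blast
lemma TT_fin: "finite (TT v)"
  by (rule finite_subset[of _ "Pow V"]) (auto simp: TT_def indep_set_def finV)
lemma I_fin: "finite {J. indep_set V E J}" using indep_finite[OF sg] .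
lemma J_fin: "indep_set V E J \<Longrightarrow> finite J" using indep_finite_set[OF sg] .

lemma decomp_bij:
  assumes v: "v \<in> V"
  shows "bij_betw (\<lambda>(T,S). T \<union> S) (SIGMA T:TT v. Pow (av v T)) {J. indep_set V E J}"
proof (rule bij_betw_byWitness[where f' = "\<lambda>J. (J - nb v, J \<inter> nb v)"])
  show "\<forall>a\<in>SIGMA T:TT v. Pow (av v T). (\<lambda>J. (J - nb v, J \<inter> nb v)) ((\<lambda>(T, S). T \<union> S) a) = a"
    using av_sub unfolding TT_def by fastforce
  show "\<forall>a'\<in>{J. indep_set V E J}. (\<lambda>(T, S). T \<union> S) (a' - nb v, a' \<inter> nb v) = a'" by auto
  show "(\<lambda>(T, S). T \<union> S) ` (SIGMA T:TT v. Pow (av v T)) \<subseteq> {J. indep_set V E J}"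
  proof clarify
    fix T S assume T: "T \<in> TT v" and S: "S \<subseteq> av v T"
    have TV: "T \<subseteq> V" and Ti: "\<And>x y. x \<in> T \<Longrightarrow> y \<in> T \<Longrightarrow> \<not> E x y"
      using T unfolding TT_def indep_set_def by auto
    have SV: "S \<subseteq> V" using S av_sub nb_sub by blast
    have ST: "\<And>s t. s \<in> S \<Longrightarrow> t \<in> T \<Longrightarrow> \<not> E s t" using S unfolding av_def by blast
    have SS: "\<And>s s'. s \<in> S \<Longrightarrow> s' \<in> S \<Longrightarrow> \<not> E s s'" using S av_sub nb_indep[OF v] by blast
    show "indep_set V E (T \<union> S)" unfolding indep_set_def
      using TV SV Ti ST SS sym by blast
  qed
  show "(\<lambda>J. (J - nb v, J \<inter> nb v)) ` {J. indep_set V E J} \<subseteq> (SIGMA T:TT v. Pow (av v T))"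
  proof
    fix p assume "p \<in> (\<lambda>J. (J - nb v, J \<inter> nb v)) ` {J. indep_set V E J}"
    then obtain J where J: "indep_set V E J" and p: "p = (J - nb v, J \<inter> nb v)" by blast
    have 1: "J - nb v \<in> TT v" using J unfolding TT_def indep_set_def by blast
    have 2: "J \<inter> nb v \<subseteq> av v (J - nb v)" using J unfolding av_def indep_set_def by blast
    show "p \<in> (SIGMA T:TT v. Pow (av v T))" using 1 2 p by blast
  qed
qed

lemma decomp:
  assumes v: "v \<in> V"
  shows "(\<Sum>J\<in>{J. indep_set V E J}. h J) = (\<Sum>T\<in>TT v. \<Sum>S\<in>Pow (av v T). h (T \<union> S))"
proof -
  have "(\<Sum>J\<in>{J. indep_set V E J}. h J) = (\<Sum>p\<in>(SIGMA T:TT v. Pow (av v T)). h ((\<lambda>(T,S). T \<union> S) p))"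
    using sum.reindex_bij_betw[OF decomp_bij[OF v], of h] by simp
  also have "\<dots> = (\<Sum>T\<in>TT v. \<Sum>S\<in>Pow (av v T). h (T \<union> S))"
    by (subst sum.Sigma) (auto simp: TT_fin av_fin split_def)
  finally show ?thesis .
qed

lemma TS_facts:
  assumes "T \<in> TT v" "S \<in> Pow (av v T)"
  shows "card (T \<union> S) = card T + card S" "(T \<union> S) \<inter> nb v = S" "v \<in> V \<Longrightarrow> (v \<in> T \<union> S) = (v \<in> T)"
proof -
  have Tf: "finite T" using assms(1) J_fin unfolding TT_def by blast
  have Sn: "S \<subseteq> nb v" using assms(2) av_sub by blast
  have Sf: "finite S" using Sn nb_fin finite_subset by blast
  have dis: "T \<inter> S = {}" using assms(1) Sn unfolding TT_def by blast
  show "card (T \<union> S) = card T + card S" using Tf Sf dis by (rule card_Un_disjoint)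
  show "(T \<union> S) \<inter> nb v = S" using assms(1) Sn unfolding TT_def by blast
  show "v \<in> V \<Longrightarrow> (v \<in> T \<union> S) = (v \<in> T)" using Sn irr unfolding nb_def by blast
qed

abbreviation Y where "Y v T \<equiv> card (av v T)"

lemma Z_eq:
  assumes v: "v \<in> V"
  shows "indep_poly V E lam = (\<Sum>T\<in>TT v. lam ^ card T * (1 + lam) ^ Y v T)"
proof -
  have "indep_poly V E lam = (\<Sum>T\<in>TT v. \<Sum>S\<in>Pow (av v T). lam ^ card (T \<union> S))"
    unfolding indep_poly_def by (rule decomp[OF v])
  also have "\<dots> = (\<Sum>T\<in>TT v. lam ^ card T * (\<Sum>S\<in>Pow (av v T). lam ^ card S))"
  proof (rule sum.cong[OF refl])
    fix T assume T: "T \<in> TT v"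
    have "(\<Sum>S\<in>Pow (av v T). lam ^ card (T \<union> S)) = (\<Sum>S\<in>Pow (av v T). lam ^ card T * lam ^ card S)"
      by (rule sum.cong[OF refl]) (simp add: TS_facts(1)[OF T] power_add)
    then show "(\<Sum>S\<in>Pow (av v T). lam ^ card (T \<union> S)) = lam ^ card T * (\<Sum>S\<in>Pow (av v T). lam ^ card S)"
      by (simp add: sum_distrib_left)
  qed
  also have "\<dots> = (\<Sum>T\<in>TT v. lam ^ card T * (1 + lam) ^ Y v T)"
    by (simp add: sum_Pow_pow(1)[OF av_fin])
  finally show ?thesis .
qed

definition Gv :: "real \<Rightarrow> 'a \<Rightarrow> real" where "Gv lam v = (\<Sum>J\<in>{J. indep_set V E J}. real (card (J \<inter> nb v)) * lam ^ card J)"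
definition Fv :: "real \<Rightarrow> 'a \<Rightarrow> real" where "Fv lam v = (\<Sum>J\<in>{J. indep_set V E J}. if v \<in> J then lam ^ card J else 0)"

lemma G_eq:
  assumes v: "v \<in> V"
  shows "Gv lam v = (\<Sum>T\<in>TT v. lam ^ card T * (real (Y v T) * lam * (1 + lam) ^ (Y v T - 1)))"
proof -
  have "Gv lam v = (\<Sum>T\<in>TT v. \<Sum>S\<in>Pow (av v T). real (card ((T \<union> S) \<inter> nb v)) * lam ^ card (T \<union> S))"
    unfolding Gv_def by (rule decomp[OF v])
  also have "\<dots> = (\<Sum>T\<in>TT v. lam ^ card T * (\<Sum>S\<in>Pow (av v T). real (card S) * lam ^ card S))"
  proof (rule sum.cong[OF refl])
    fix T assume T: "T \<in> TT v"
    have "(\<Sum>S\<in>Pow (av v T). real (card ((T \<union> S) \<inter> nb v)) * lam ^ card (T \<union> S)) = (\<Sum>S\<in>Pow (av v T). lam ^ card T * (real (card S) * lam ^ card S))"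
      by (rule sum.cong[OF refl]) (simp add: TS_facts(1,2)[OF T] power_add)
    then show "(\<Sum>S\<in>Pow (av v T). real (card ((T \<union> S) \<inter> nb v)) * lam ^ card (T \<union> S)) = lam ^ card T * (\<Sum>S\<in>Pow (av v T). real (card S) * lam ^ card S)"
      by (simp add: sum_distrib_left)
  qed
  also have "\<dots> = (\<Sum>T\<in>TT v. lam ^ card T * (real (Y v T) * lam * (1 + lam) ^ (Y v T - 1)))"
    by (simp add: sum_Pow_pow(2)[OF av_fin])
  finally show ?thesis .
qed

lemma F_eq:
  assumes v: "v \<in> V"
  shows "Fv lam v = (\<Sum>T\<in>TT v. if v \<in> T then lam ^ card T else 0)"
proof -
  have "Fv lam v = (\<Sum>T\<in>TT v. \<Sum>S\<in>Pow (av v T). if v \<in> T \<union> S then lam ^ card (T \<union> S) else 0)"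
    unfolding Fv_def by (rule decomp[OF v])
  also have "\<dots> = (\<Sum>T\<in>TT v. if v \<in> T then lam ^ card T else 0)"
  proof (rule sum.cong[OF refl])
    fix T assume T: "T \<in> TT v"
    show "(\<Sum>S\<in>Pow (av v T). if v \<in> T \<union> S then lam ^ card (T \<union> S) else 0) = (if v \<in> T then lam ^ card T else 0)"
    proof (cases "v \<in> T")
      case True
      have "av v T = {}" unfolding av_def nb_def using True sym by blast
      then show ?thesis using True by simp
    next
      case False
      have "\<forall>S\<in>Pow (av v T). (if v \<in> T \<union> S then lam ^ card (T \<union> S) else 0) = 0"
        using TS_facts(3)[OF T _ v] False by auto
      then show ?thesis using False by simp
    qed
  qed
  finally show ?thesis .
qed

lemma F_rel:
  assumes v: "v \<in> V"
  shows "(1 + lam) * Fv lam v = lam * (\<Sum>T\<in>TT v. lam ^ card T)"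
proof -
  let ?A = "{T\<in>TT v. v \<in> T}" and ?B = "{T\<in>TT v. v \<notin> T}"
  have un: "TT v = ?A \<union> ?B" by blast
  have fA: "finite ?A" "finite ?B" using TT_fin by auto
  have F1: "Fv lam v = (\<Sum>T\<in>?A. lam ^ card T)"
    unfolding F_eq[OF v] using TT_fin by (simp add: sum.If_cases Int_def conj_commute)
  have bij: "bij_betw (insert v) ?B ?A"
  proof (rule bij_betw_byWitness[where f' = "\<lambda>T. T - {v}"])
    show "\<forall>a\<in>?B. insert v a - {v} = a" by auto
    show "\<forall>a'\<in>?A. insert v (a' - {v}) = a'" by auto
    show "insert v ` ?B \<subseteq> ?A"
    proof
      fix p assume "p \<in> insert v ` ?B"
      then obtain T where T: "T \<in> TT v" "v \<notin> T" and p: "p = insert v T" by blast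
      have "\<And>t. t \<in> T \<Longrightarrow> \<not> E v t" using T(1) edgeV unfolding TT_def nb_def by blast
      then have "insert v T \<in> TT v" using T(1) v irr sym unfolding TT_def indep_set_def nb_def by blast
      then show "p \<in> ?A" using p by blast
    qed
    show "(\<lambda>T. T - {v}) ` ?A \<subseteq> ?B" unfolding TT_def indep_set_def by blast
  qed
  have "(\<Sum>T\<in>?A. lam ^ card T) = (\<Sum>T\<in>?B. lam ^ card (insert v T))"
    using sum.reindex_bij_betw[OF bij, of "\<lambda>T. lam ^ card T"] by simp
  also have "\<dots> = (\<Sum>T\<in>?B. lam * lam ^ card T)"
    by (rule sum.cong) (auto simp: TT_def J_fin)
  also have "\<dots> = lam * (\<Sum>T\<in>?B. lam ^ card T)"
    by (rule sum_distrib_left[symmetric])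
  finally have AB: "(\<Sum>T\<in>?A. lam ^ card T) = lam * (\<Sum>T\<in>?B. lam ^ card T)" .
  have "(\<Sum>T\<in>TT v. lam ^ card T) = (\<Sum>T\<in>?A. lam ^ card T) + (\<Sum>T\<in>?B. lam ^ card T)"
    by (subst un, rule sum.union_disjoint) (use fA in auto)
  then show ?thesis unfolding F1 using AB by (simp add: algebra_simps)
qed

end

context gr begin

definition sig :: "real \<Rightarrow> 'a \<Rightarrow> real" where
  "sig lam v = (\<Sum>T\<in>TT v. lam ^ card T * slk (1 + lam) d (Y v T))"

lemma sig_eq:
  assumes v: "v \<in> V" and lam: "lam > 0"
  shows "sig lam v = indep_poly V E lam - ((1+lam)/lam) * Fv lam v
            - ((1 - 1/(1+lam)^d) / real d) * (((1+lam)/lam) * Gv lam v)"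
proof -
  define q where "q = 1 + lam"
  define c where "c = (1 - 1/(1+lam)^d) / real d"
  have s1: "sig lam v = (\<Sum>T\<in>TT v. lam ^ card T * q ^ Y v T) - (\<Sum>T\<in>TT v. lam ^ card T)
       - c * (\<Sum>T\<in>TT v. lam ^ card T * (real (Y v T) * q ^ Y v T))"
  proof -
    have "sig lam v = (\<Sum>T\<in>TT v. lam ^ card T * q ^ Y v T - lam ^ card T - c * (lam ^ card T * (real (Y v T) * q ^ Y v T)))"
      unfolding sig_def slk_def q_def c_def by (rule sum.cong[OF refl]) (simp add: algebra_simps)
    then show ?thesis by (simp add: sum_subtractf sum_distrib_left)
  qed
  have s2: "(\<Sum>T\<in>TT v. lam ^ card T * (real (Y v T) * q ^ Y v T)) = (q/lam) * Gv lam v"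
  proof -
    have "(\<Sum>T\<in>TT v. lam ^ card T * (real (Y v T) * q ^ Y v T))
        = (\<Sum>T\<in>TT v. (q/lam) * (lam ^ card T * (real (Y v T) * lam * (1 + lam) ^ (Y v T - 1))))"
    proof (rule sum.cong[OF refl])
      fix T
      show "lam ^ card T * (real (Y v T) * q ^ Y v T) = (q/lam) * (lam ^ card T * (real (Y v T) * lam * (1 + lam) ^ (Y v T - 1)))"
      proof (cases "Y v T")
        case 0 then show ?thesis by simp
      next
        case (Suc k) then show ?thesis using lam unfolding q_def by (simp add: field_simps)
      qed
    qed
    then show ?thesis unfolding G_eq[OF v] by (simp add: sum_distrib_left)
  qed
  have s3: "(\<Sum>T\<in>TT v. lam ^ card T) = (q/lam) * Fv lam v"
    using F_rel[OF v, of lam] lam unfolding q_def by (simp add: field_simps)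
  show ?thesis unfolding s1 unfolding s2 s3 unfolding Z_eq[OF v, of lam] q_def c_def by simp
qed

lemma sig_terms_nonneg:
  assumes v: "v \<in> V" and lam: "lam > 0" and d: "d \<ge> 1" and T: "T \<in> TT v"
  shows "lam ^ card T * slk (1 + lam) d (Y v T) \<ge> 0"
  using slk_nonneg(1)[of "1+lam" "Y v T" d] av_card[OF v] lam d by simp

lemma sig_nonneg:
  assumes v: "v \<in> V" and lam: "lam > 0" and d: "d \<ge> 1"
  shows "sig lam v \<ge> 0"
  unfolding sig_def by (rule sum_nonneg) (rule sig_terms_nonneg[OF v lam d])

lemma F_sum:
  "(\<Sum>v\<in>V. Fv lam v) = (\<Sum>J\<in>{J. indep_set V E J}. real (card J) * lam ^ card J)"
proof -
  have "(\<Sum>v\<in>V. Fv lam v) = (\<Sum>J\<in>{J. indep_set V E J}. \<Sum>v\<in>V. if v \<in> J then lam ^ card J else 0)"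
    unfolding Fv_def by (rule sum.swap)
  also have "\<dots> = (\<Sum>J\<in>{J. indep_set V E J}. real (card J) * lam ^ card J)"
  proof (rule sum.cong[OF refl])
    fix J assume "J \<in> {J. indep_set V E J}"
    then have JV: "J \<subseteq> V" unfolding indep_set_def by blast
    have "(\<Sum>v\<in>V. if v \<in> J then lam ^ card J else 0) = (\<Sum>v\<in>V \<inter> J. lam ^ card J)"
      using sum.inter_restrict[OF finV, of "\<lambda>_. lam ^ card J" J] by simp
    also have "V \<inter> J = J" using JV by blast
    finally show "(\<Sum>v\<in>V. if v \<in> J then lam ^ card J else 0) = real (card J) * lam ^ card J" by simp
  qed
  finally show ?thesis .
qed

lemma card_filter_sum: "finite A \<Longrightarrow> card {x\<in>A. P x} = (\<Sum>x\<in>A. if P x then 1 else 0)"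
  by (simp add: sum.inter_filter[symmetric])

lemma deg_sum:
  assumes JV: "J \<subseteq> V"
  shows "(\<Sum>v\<in>V. card (J \<inter> nb v)) = d * card J"
proof -
  have fJ: "finite J" using JV finV finite_subset by blast
  have "(\<Sum>v\<in>V. card (J \<inter> nb v)) = (\<Sum>v\<in>V. \<Sum>u\<in>J. if E v u then 1 else 0)"
  proof (rule sum.cong[OF refl])
    fix v assume "v \<in> V"
    have "J \<inter> nb v = {u\<in>J. E v u}" using JV unfolding nb_def by blast
    then show "card (J \<inter> nb v) = (\<Sum>u\<in>J. if E v u then 1 else 0)" using card_filter_sum[OF fJ] by simp
  qed
  also have "\<dots> = (\<Sum>u\<in>J. \<Sum>v\<in>V. if E v u then 1 else 0)" by (rule sum.swap)
  also have "\<dots> = (\<Sum>u\<in>J. d)"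
  proof (rule sum.cong[OF refl])
    fix u assume u: "u \<in> J"
    have "(\<Sum>v\<in>V. if E v u then 1 else 0) = card {v\<in>V. E v u}" using card_filter_sum[OF finV] by simp
    also have "{v\<in>V. E v u} = nb u" unfolding nb_def using sym by blast
    also have "card (nb u) = d" using nb_card u JV by blast
    finally show "(\<Sum>v\<in>V. if E v u then 1 else 0) = d" .
  qed
  finally show ?thesis by simp
qed

lemma G_sum:
  "(\<Sum>v\<in>V. Gv lam v) = real d * (\<Sum>J\<in>{J. indep_set V E J}. real (card J) * lam ^ card J)"
proof -
  have "(\<Sum>v\<in>V. Gv lam v) = (\<Sum>J\<in>{J. indep_set V E J}. \<Sum>v\<in>V. real (card (J \<inter> nb v)) * lam ^ card J)"
    unfolding Gv_def by (rule sum.swap)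
  also have "\<dots> = (\<Sum>J\<in>{J. indep_set V E J}. real d * (real (card J) * lam ^ card J))"
  proof (rule sum.cong[OF refl])
    fix J assume "J \<in> {J. indep_set V E J}"
    then have JV: "J \<subseteq> V" unfolding indep_set_def by blast
    have "(\<Sum>v\<in>V. real (card (J \<inter> nb v)) * lam ^ card J) = real (\<Sum>v\<in>V. card (J \<inter> nb v)) * lam ^ card J"
      by (simp add: sum_distrib_right)
    also have "\<dots> = real d * (real (card J) * lam ^ card J)" unfolding deg_sum[OF JV] by simp
    finally show "(\<Sum>v\<in>V. real (card (J \<inter> nb v)) * lam ^ card J) = real d * (real (card J) * lam ^ card J)" .
  qed
  finally show ?thesis by (simp add: sum_distrib_left)
qed

lemma total:
  assumes lam: "lam > 0" and d: "d \<ge> 1"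
  shows "((1+lam)/lam) * (2 - 1/(1+lam)^d) * (\<Sum>J\<in>{J. indep_set V E J}. real (card J) * lam ^ card J)
     = real (card V) * indep_poly V E lam - (\<Sum>v\<in>V. sig lam v)"
proof -
  let ?W = "\<Sum>J\<in>{J. indep_set V E J}. real (card J) * lam ^ card J"
  let ?Z = "indep_poly V E lam"
  define c where "c = (1 - 1/(1+lam)^d) / real d"
  have "(\<Sum>v\<in>V. sig lam v) = (\<Sum>v\<in>V. ?Z - ((1+lam)/lam) * Fv lam v - c * (((1+lam)/lam) * Gv lam v))"
    by (rule sum.cong[OF refl]) (simp add: sig_eq[OF _ lam] c_def)
  also have "\<dots> = real (card V) * ?Z - ((1+lam)/lam) * (\<Sum>v\<in>V. Fv lam v) - c * (((1+lam)/lam) * (\<Sum>v\<in>V. Gv lam v))"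
    by (simp add: sum_subtractf sum_distrib_left)
  also have "\<dots> = real (card V) * ?Z - ((1+lam)/lam) * ?W - (c * real d) * (((1+lam)/lam) * ?W)"
    unfolding F_sum G_sum by (simp add: algebra_simps)
  also have "c * real d = 1 - 1/(1+lam)^d" unfolding c_def using d by simp
  finally have X: "(\<Sum>v\<in>V. sig lam v) = real (card V) * ?Z - ((1+lam)/lam) * ?W - (1 - 1/(1+lam)^d) * (((1+lam)/lam) * ?W)" .
  have alg: "\<And>a x w::real. a * (2 - x) * w = a * w + (1 - x) * (a * w)" by algebra
  show ?thesis using X alg[of "(1+lam)/lam" "1/(1+lam)^d" ?W] by linarith
qed

end

lemma bij_tag:
  assumes "bij_betw g A {0..<d}"
  shows "bij_betw (\<lambda>x. (m::nat, g x, b::bool)) A ({m} \<times> ({0..<d} \<times> {b}))"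
proof -
  have "bij_betw (\<lambda>k. (m, k, b)) {0..<d} ({m} \<times> ({0..<d} \<times> {b}))"
    unfolding bij_betw_def inj_on_def by auto
  from bij_betw_trans[OF assms this] show ?thesis by (simp add: comp_def)
qed

lemma struct:
  fixes V :: "'a set" and E :: "'a \<Rightarrow> 'a \<Rightarrow> bool"
  assumes "finite V" "\<And>u w. E u w \<Longrightarrow> u \<in> V \<and> w \<in> V" "\<And>u w. E u w \<Longrightarrow> E w u" "\<And>u. \<not> E u u" "d \<ge> 1"
    "\<forall>v\<in>V. card {u\<in>V. E v u} = d"
    "\<forall>v\<in>V. \<forall>w\<in>V. {u\<in>V. E v u} \<inter> {u\<in>V. E w u} \<noteq> {} \<longrightarrow> {u\<in>V. E v u} = {u\<in>V. E w u}"
  shows "disjoint_union_Kdd V E d"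
  using assms
proof (induction "card V" arbitrary: V E rule: less_induct)
  case less
  note fin = less.prems(1) and eV = less.prems(2) and sym = less.prems(3) and irr = less.prems(4)
    and d1 = less.prems(5) and reg = less.prems(6) and Q = less.prems(7)
  show ?case
  proof (cases "V = {}")
    case True
    show ?thesis unfolding disjoint_union_Kdd_def
      by (rule exI[of _ 0], rule exI[of _ "\<lambda>_. (0, 0, True)"]) (simp add: True bij_betw_def)
  next
    case False
    define N where "N x = {u\<in>V. E x u}" for x
    have Nsym: "z \<in> N x \<longleftrightarrow> x \<in> N z" for x z unfolding N_def using eV sym by blast
    obtain v where v: "v \<in> V" using False by blast
    have "card (N v) = d" using reg v unfolding N_def by blast
    then have "N v \<noteq> {}" using d1 by auto
    then obtain u where u: "u \<in> N v" by blast
    have uV: "u \<in> V" using u unfolding N_def by blast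
    define A where "A = N u"
    define B where "B = N v"
    have QN: "x \<in> V \<Longrightarrow> y \<in> V \<Longrightarrow> N x \<inter> N y \<noteq> {} \<Longrightarrow> N x = N y" for x y using Q unfolding N_def by blast
    have vA: "v \<in> A" unfolding A_def using u Nsym by blast
    have AV: "A \<subseteq> V" and BV: "B \<subseteq> V" unfolding A_def B_def N_def by auto
    have NA: "x \<in> A \<Longrightarrow> N x = B" for x
    proof -
      assume x: "x \<in> A"
      then have "u \<in> N x" unfolding A_def using Nsym by blast
      then have "N x \<inter> N v \<noteq> {}" using u by blast
      then show "N x = B" unfolding B_def using QN x AV v by blast
    qed
    have NB: "x \<in> B \<Longrightarrow> N x = A" for x
    proof -
      assume x: "x \<in> B"
      then have "v \<in> N x" unfolding B_def using Nsym by blast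
      then have "N x \<inter> N u \<noteq> {}" using vA unfolding A_def by blast
      then show "N x = A" unfolding A_def using QN x BV uV by blast
    qed
    have disj: "A \<inter> B = {}"
    proof (rule ccontr)
      assume "A \<inter> B \<noteq> {}"
      then obtain x where "x \<in> A" "x \<in> B" by blast
      then have "A = B" using NA NB by metis
      then have "u \<in> N u" using u unfolding A_def B_def by simp
      then show False using irr unfolding N_def by blast
    qed
    have cA: "card A = d" and cB: "card B = d" using reg uV v unfolding A_def B_def N_def by auto
    have EN: "E x z \<longleftrightarrow> z \<in> N x" if "x \<in> V" for x z unfolding N_def using eV by blast
    define C where "C = A \<union> B"
    have closed: "x \<in> C \<Longrightarrow> E x z \<Longrightarrow> z \<in> C" for x z
      using NA NB eV unfolding C_def N_def by blast
    define V' where "V' = V - C"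
    define E' where "E' x z = (E x z \<and> x \<in> V' \<and> z \<in> V')" for x z
    have out: "z \<notin> C" if "x \<in> V'" "E x z" for x z
    proof
      assume "z \<in> C"
      then have "x \<in> C" using closed[of z x] sym[OF that(2)] by blast
      then show False using that(1) unfolding V'_def by blast
    qed
    have N': "x \<in> V' \<Longrightarrow> {z\<in>V'. E' x z} = N x" for x
    proof -
      assume x: "x \<in> V'"
      show "{z\<in>V'. E' x z} = N x"
      proof (intro set_eqI iffI)
        fix z assume "z \<in> {z\<in>V'. E' x z}" then show "z \<in> N x" unfolding E'_def N_def V'_def by blast
      next
        fix z assume z: "z \<in> N x"
        then have "E x z" "z \<in> V" unfolding N_def by auto
        then have "z \<in> V'" using out[OF x] unfolding V'_def by blast
        then show "z \<in> {z\<in>V'. E' x z}" using x \<open>E x z\<close> unfolding E'_def by blast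
      qed
    qed
    have lt: "card V' < card V" unfolding V'_def
    proof (rule psubset_card_mono[OF fin])
      show "V - C \<subset> V" using vA v unfolding C_def by blast
    qed
    have "disjoint_union_Kdd V' E' d"
    proof (rule less.hyps[OF lt])
      show "finite V'" using fin unfolding V'_def by simp
      show "\<And>u w. E' u w \<Longrightarrow> u \<in> V' \<and> w \<in> V'" unfolding E'_def by blast
      show "\<And>u w. E' u w \<Longrightarrow> E' w u" unfolding E'_def using sym by blast
      show "\<And>u. \<not> E' u u" unfolding E'_def using irr by blast
      show "d \<ge> 1" by fact
      show "\<forall>v\<in>V'. card {u\<in>V'. E' v u} = d" using N' reg unfolding N_def V'_def by auto
      show "\<forall>v\<in>V'. \<forall>w\<in>V'. {u\<in>V'. E' v u} \<inter> {u\<in>V'. E' w u} \<noteq> {} \<longrightarrow> {u\<in>V'. E' v u} = {u\<in>V'. E' w u}"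
        using N' QN unfolding V'_def by auto
    qed
    then obtain m :: nat and f' where f': "bij_betw f' V' ({0..<m} \<times> Kdd_vertices d)"
      and fE: "\<forall>x\<in>V'. \<forall>z\<in>V'. E' x z \<longleftrightarrow> fst (f' x) = fst (f' z) \<and> Kdd_edge d (snd (f' x)) (snd (f' z))"
      unfolding disjoint_union_Kdd_def by blast
    obtain gA where gA: "bij_betw gA A {0..<d}" using ex_bij_betw_finite_nat[of A] cA fin AV finite_subset by metis
    obtain gB where gB: "bij_betw gB B {0..<d}" using ex_bij_betw_finite_nat[of B] cB fin BV finite_subset by metis
    define f where "f x = (if x \<in> A then (m, gA x, True) else if x \<in> B then (m, gB x, False) else f' x)" for x
    have bA: "bij_betw f A ({m} \<times> ({0..<d} \<times> {True}))"
      using bij_tag[OF gA, of m True] by (rule bij_betw_cong[THEN iffD1, rotated]) (simp add: f_def)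
    have bB: "bij_betw f B ({m} \<times> ({0..<d} \<times> {False}))"
      using bij_tag[OF gB, of m False] by (rule bij_betw_cong[THEN iffD1, rotated]) (use disj in \<open>auto simp: f_def\<close>)
    have bV: "bij_betw f V' ({0..<m} \<times> Kdd_vertices d)"
      using f' by (rule bij_betw_cong[THEN iffD1, rotated]) (auto simp: f_def V'_def C_def)
    have "bij_betw f (A \<union> (B \<union> V')) ({m} \<times> ({0..<d} \<times> {True}) \<union> ({m} \<times> ({0..<d} \<times> {False}) \<union> {0..<m} \<times> Kdd_vertices d))"
      by (intro bij_betw_combine bA bB bV) auto
    moreover have "A \<union> (B \<union> V') = V" unfolding V'_def C_def using AV BV by blast
    moreover have "{m} \<times> ({0..<d} \<times> {True}) \<union> ({m} \<times> ({0..<d} \<times> {False}) \<union> {0..<m} \<times> Kdd_vertices d)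
        = {0..<Suc m} \<times> Kdd_vertices d"
      unfolding Kdd_vertices_def by (auto simp: less_Suc_eq)
    ultimately have bij: "bij_betw f V ({0..<Suc m} \<times> Kdd_vertices d)" by simp
    have fA: "x \<in> A \<Longrightarrow> fst (f x) = m \<and> snd (f x) \<in> Kdd_vertices d \<and> snd (snd (f x))" for x
      using gA unfolding f_def Kdd_vertices_def bij_betw_def by auto
    have fB: "x \<in> B \<Longrightarrow> fst (f x) = m \<and> snd (f x) \<in> Kdd_vertices d \<and> \<not> snd (snd (f x))" for x
      using gB disj unfolding f_def Kdd_vertices_def bij_betw_def by auto
    have fV: "x \<in> V' \<Longrightarrow> fst (f x) < m \<and> f x = f' x" for x
    proof -
      assume x: "x \<in> V'"
      have "f' x \<in> {0..<m} \<times> Kdd_vertices d" using bij_betw_apply[OF f' x] .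
      moreover have "x \<notin> A" "x \<notin> B" using x unfolding V'_def C_def by auto
      ultimately show ?thesis unfolding f_def by (cases "f' x") auto
    qed
    have edges: "E x z \<longleftrightarrow> fst (f x) = fst (f z) \<and> Kdd_edge d (snd (f x)) (snd (f z))"
      if x: "x \<in> V" and z: "z \<in> V" for x z
    proof -
      have xc: "x \<in> A \<or> x \<in> B \<or> x \<in> V'" and zc: "z \<in> A \<or> z \<in> B \<or> z \<in> V'"
        using x z unfolding V'_def C_def by auto
      show ?thesis
      proof (cases "x \<in> V' \<and> z \<in> V'")
        case True
        then show ?thesis using fE fV unfolding E'_def by auto
      next
        case False
        have zV'C: "z \<in> V' \<Longrightarrow> z \<notin> A \<and> z \<notin> B" unfolding V'_def C_def by blast
        have xV'C: "x \<in> V' \<Longrightarrow> x \<notin> A \<and> x \<notin> B" unfolding V'_def C_def by blast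
        have ExA: "x \<in> A \<Longrightarrow> E x z \<longleftrightarrow> z \<in> B" using EN[OF x] NA by blast
        have ExB: "x \<in> B \<Longrightarrow> E x z \<longleftrightarrow> z \<in> A" using EN[OF x] NB by blast
        have ExV: "x \<in> V' \<Longrightarrow> \<not> E x z"
        proof
          assume "x \<in> V'" "E x z"
          then have "z \<notin> C" using out by blast
          then have "z \<in> V'" using z unfolding V'_def by blast
          then show False using False \<open>x \<in> V'\<close> by blast
        qed
        let ?P = "fst (f x) = fst (f z) \<and> Kdd_edge d (snd (f x)) (snd (f z))"
        have P: "?P \<longleftrightarrow> fst (f x) = fst (f z) \<and> snd (f x) \<in> Kdd_vertices d \<and> snd (f z) \<in> Kdd_vertices d
                  \<and> snd (snd (f x)) \<noteq> snd (snd (f z))" unfolding Kdd_edge_def by blast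
        from xc show ?thesis
        proof (elim disjE)
          assume xA: "x \<in> A"
          from zc show ?thesis
          proof (elim disjE)
            assume zA: "z \<in> A" then have "z \<notin> B" using disj by blast
            then show ?thesis unfolding ExA[OF xA] P using fA[OF xA] fA[OF zA] by simp
          next
            assume zB: "z \<in> B"
            show ?thesis unfolding ExA[OF xA] P using fA[OF xA] fB[OF zB] zB by simp
          next
            assume zV: "z \<in> V'"
            show ?thesis unfolding ExA[OF xA] P using fA[OF xA] conjunct1[OF fV[OF zV]] zV'C[OF zV] by auto
          qed
        next
          assume xB: "x \<in> B"
          from zc show ?thesis
          proof (elim disjE)
            assume zA: "z \<in> A"
            show ?thesis unfolding ExB[OF xB] P using fB[OF xB] fA[OF zA] zA by simp
          next
            assume zB: "z \<in> B" then have "z \<notin> A" using disj by blast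
            then show ?thesis unfolding ExB[OF xB] P using fB[OF xB] fB[OF zB] by simp
          next
            assume zV: "z \<in> V'"
            show ?thesis unfolding ExB[OF xB] P using fB[OF xB] conjunct1[OF fV[OF zV]] zV'C[OF zV] by auto
          qed
        next
          assume xV: "x \<in> V'"
          then have zn: "z \<notin> V'" using False by blast
          have "\<not> ?P"
          proof
            assume ?P
            then have "fst (f z) < m" using conjunct1[OF fV[OF xV]] by simp
            then show False using zc zn fA[of z] fB[of z] by auto
          qed
          then show ?thesis using ExV[OF xV] by simp
        qed
      qed
    qed
    show ?thesis unfolding disjoint_union_Kdd_def using bij edges by blast
  qed
qed

context gr begin

lemma Y_cases:
  assumes v: "v \<in> V" and lam: "lam > 0" and d: "d \<ge> 1" and s0: "sig lam v = 0" and T: "T \<in> TT v"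
  shows "Y v T = 0 \<or> Y v T = d"
proof -
  have "(\<Sum>T\<in>TT v. lam ^ card T * slk (1 + lam) d (Y v T)) = 0 \<longleftrightarrow> (\<forall>T\<in>TT v. lam ^ card T * slk (1 + lam) d (Y v T) = 0)"
    by (rule sum_nonneg_eq_0_iff[OF TT_fin]) (rule sig_terms_nonneg[OF v lam d])
  then have "\<forall>T\<in>TT v. lam ^ card T * slk (1 + lam) d (Y v T) = 0"
    using s0 unfolding sig_def by blast
  then have "slk (1 + lam) d (Y v T) = 0" using T lam by simp
  then show ?thesis using slk_nonneg(2)[of "1+lam" "Y v T" d] av_card[OF v] lam d by simp
qed

lemma Q_from_Y:
  assumes Yc: "\<And>v T. v \<in> V \<Longrightarrow> T \<in> TT v \<Longrightarrow> Y v T = 0 \<or> Y v T = d"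
    and v: "v \<in> V" and w: "w \<in> V" and ne: "nb v \<inter> nb w \<noteq> {}"
  shows "nb v = nb w"
proof (cases "E v w")
  case True
  obtain u where u: "u \<in> nb v" "u \<in> nb w" using ne by blast
  then have "E v u" "E u w" "u \<in> V" using sym unfolding nb_def by auto
  then show ?thesis using tf True v w unfolding triangle_free_def by blast
next
  case False
  have T: "{w} \<in> TT v" unfolding TT_def indep_set_def nb_def using w irr False by auto
  have avw: "av v {w} = {u\<in>nb v. \<not> E u w}" unfolding av_def by simp
  from Yc[OF v T] show ?thesis
  proof
    assume "Y v {w} = 0"
    then have "av v {w} = {}" using av_fin by simp
    then have "\<forall>u\<in>nb v. E u w" unfolding avw by blast
    then have sub: "nb v \<subseteq> nb w" unfolding nb_def using sym by blast
    show ?thesis using card_subset_eq[OF nb_fin sub] nb_card[OF v] nb_card[OF w] by simp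
  next
    assume "Y v {w} = d"
    then have "av v {w} = nb v" using card_subset_eq[OF nb_fin av_sub] nb_card[OF v] by simp
    then have "\<forall>u\<in>nb v. \<not> E u w" unfolding avw by blast
    then have "nb v \<inter> nb w = {}" unfolding nb_def using sym by blast
    then show ?thesis using ne by blast
  qed
qed

end

theorem theorem2p2:
  fixes V :: "'a set" and E :: "'a \<Rightarrow> 'a \<Rightarrow> bool" and d :: nat and lam :: real
  assumes "d \<ge> 1"
    and "simple_graph V E"
    and "regular V E d"
    and "triangle_free V E"
    and "lam > 0"
  shows "occ V E lam / real (card V) \<le> occ (Kdd_vertices d) (Kdd_edge d) lam / (2 * real d)
       \<and> occ (Kdd_vertices d) (Kdd_edge d) lam / (2 * real d)
           = lam * (1 + lam) ^ (d - 1) / (2 * (1 + lam) ^ d - 1)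
       \<and> (occ V E lam / real (card V) = occ (Kdd_vertices d) (Kdd_edge d) lam / (2 * real d)
           \<longrightarrow> disjoint_union_Kdd V E d)"
proof -
  note d = assms(1) and lam = assms(5)
  interpret gr V E d using assms(2-4) by unfold_locales
  define W where "W = (\<Sum>J\<in>{J. indep_set V E J}. real (card J) * lam ^ card J)"
  define Z where "Z = indep_poly V E lam"
  define n where "n = real (card V)"
  define K where "K = lam * (1 + lam) ^ (d - 1) / (2 * (1 + lam) ^ d - 1)"
  define \<sigma> where "\<sigma> = (\<Sum>v\<in>V. sig lam v)"
  have Zp: "Z > 0" unfolding Z_def using indep_poly_pos[OF assms(2) lam] .
  have occ: "occ V E lam = W / Z" unfolding occ_def W_def Z_def lam_deriv[OF assms(2)] ..
  have KK: "occ (Kdd_vertices d) (Kdd_edge d) lam / (2 * real d) = K" unfolding K_def by (rule Kdd_occ[OF d lam])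
  have qd1: "(1 + lam) ^ d \<ge> 1" using lam by simp
  have Kp: "K > 0"
  proof -
    have p1: "(1 + lam) ^ (d - 1) > 0" using lam by simp
    have p2: "2 * (1 + lam) ^ d - 1 > 0" using qd1 by simp
    show ?thesis unfolding K_def using lam p1 p2 by (intro divide_pos_pos mult_pos_pos)
  qed
  have tot: "((1+lam)/lam) * (2 - 1/(1+lam)^d) * W = n * Z - \<sigma>"
    unfolding W_def n_def Z_def \<sigma>_def by (rule total[OF lam d])
  have qd: "(1 + lam) ^ d = (1 + lam) * (1 + lam) ^ (d - 1)"
    using d by (metis Suc_diff_le diff_Suc_1 power_Suc)
  have inv: "((1+lam)/lam) * (2 - 1/(1+lam)^d) * K = 1"
  proof -
    have p1: "(1 + lam) ^ (d - 1) > 0" using lam by simp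
    have p2: "2 * (1 + lam) ^ d - 1 > 0" using qd1 by simp
    have gen: "\<And>Q a l::real. Q > 0 \<Longrightarrow> a > 0 \<Longrightarrow> l > 0 \<Longrightarrow> 2*(Q*a) - 1 > 0 \<Longrightarrow>
        (Q/l) * (2 - 1/(Q*a)) * (l * a / (2*(Q*a) - 1)) = 1"
      by (simp add: field_simps)
    have p3: "2 * ((1 + lam) * (1 + lam) ^ (d - 1)) - 1 > 0" using p2 unfolding qd .
    show ?thesis unfolding K_def qd by (rule gen) (use lam p1 p3 in auto)
  qed
  have WK: "W = K * (n * Z - \<sigma>)"
  proof -
    have "K * (n * Z - \<sigma>) = (((1+lam)/lam) * (2 - 1/(1+lam)^d) * K) * W" unfolding tot[symmetric] by simp
    then show ?thesis using inv by simp
  qed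
  have \<sigma>0: "\<sigma> \<ge> 0" unfolding \<sigma>_def by (rule sum_nonneg) (rule sig_nonneg[OF _ lam d])
  have c1: "occ V E lam / real (card V) \<le> K"
  proof (cases "card V = 0")
    case True then show ?thesis using Kp by simp
  next
    case False
    then have np: "n > 0" unfolding n_def by simp
    have "occ V E lam / real (card V) = K * (n * Z - \<sigma>) / (Z * n)" unfolding occ WK n_def by simp
    also have "\<dots> \<le> K * (n * Z) / (Z * n)"
      using Kp np Zp \<sigma>0 by (intro divide_right_mono) (auto simp: mult_left_mono)
    also have "\<dots> = K" using np Zp by simp
    finally show ?thesis .
  qed
  have c3: "disjoint_union_Kdd V E d" if eq: "occ V E lam / real (card V) = K"
  proof -
    have np: "n > 0" using eq Kp unfolding n_def by (cases "card V = 0") auto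
    have "K * (n * Z - \<sigma>) / (Z * n) = K" using eq unfolding occ WK n_def by simp
    then have "K * (n * Z - \<sigma>) = K * (Z * n)" using np Zp by (simp add: field_simps)
    then have "\<sigma> = 0" using Kp by (simp add: algebra_simps)
    then have s0: "\<forall>v\<in>V. sig lam v = 0"
    proof -
      have "(\<Sum>v\<in>V. sig lam v) = 0 \<longleftrightarrow> (\<forall>v\<in>V. sig lam v = 0)"
        by (rule sum_nonneg_eq_0_iff[OF finV]) (rule sig_nonneg[OF _ lam d])
      then show ?thesis using \<open>\<sigma> = 0\<close> unfolding \<sigma>_def by blast
    qed
    have Yc: "\<And>v T. v \<in> V \<Longrightarrow> T \<in> TT v \<Longrightarrow> Y v T = 0 \<or> Y v T = d"
      using Y_cases[OF _ lam d] s0 by blast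
    show ?thesis
    proof (rule struct[OF finV])
      show "\<And>u w. E u w \<Longrightarrow> u \<in> V \<and> w \<in> V" by (rule edgeV)
      show "\<And>u w. E u w \<Longrightarrow> E w u" by (rule sym)
      show "\<And>u. \<not> E u u" by (rule irr)
      show "d \<ge> 1" by (rule d)
      show "\<forall>v\<in>V. card {u\<in>V. E v u} = d" using nb_card unfolding nb_def by blast
      show "\<forall>v\<in>V. \<forall>w\<in>V. {u\<in>V. E v u} \<inter> {u\<in>V. E w u} \<noteq> {} \<longrightarrow> {u\<in>V. E v u} = {u\<in>V. E w u}"
        using Q_from_Y[OF Yc] unfolding nb_def by blast
    qed
  qed
  show ?thesis unfolding KK using c1 c3 K_def by blast
qed

end
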